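(* Let $\mathfrak g$ be a barrelled locally convex Lie algebra, $(\pi,V)$ a continuous unitary representation of $\mathfrak g$, and $n\in\mathbb N\cup\{\infty\}$. Let $t\mapsto\xi_t$ be a $C^n$-curve in $\mathfrak g$ and $t\mapsto\psi_t$ a $C^n$-curve in $V$ for the strong (resp. weak) topology, both defined on a common real interval. Then $t\mapsto\pi(\xi_t)\psi_t$ is a $C^n$-curve in $V$ for the strong (resp. weak) topology, and for all integers $0\le k\le n$, $$\frac{d^k}{dt^k}\pi(\xi_t)\psi_t=\sum_{j=0}^{k}\binom{k}{j}\pi\big(\xi^{(j)}_t\big)\psi^{(k-j)}_t.$$
   Context: Barrelled: every closed, convex, circled, absorbing subset is a $0$-neighbourhood. A unitary representation $(\pi,V)$ of $\mathfrak g$: $V$ complex pre-Hilbert (completion $\mathcal H_V$), $\pi\colon\mathfrak g\to\mathrm{End}(V)$ a Lie algebra homomorphism with skew-symmetric values. $\pi_n(\xi_n,\dots,\xi_1)=\pi(\xi_n)\cdots\pi(\xi_1)$, $\pi_0(\lambda)=\lambda\mathbf 1$. Continuous: $\boldsymbol\xi\mapsto\pi_n(\boldsymbol\xi)\psi$, $\mathfrak g^n\to\mathcal H_V$, norm continuous for all $n,\psi$. Weak topology: seminorms $\|\pi_n(\boldsymbol\xi)\psi\|$, $\boldsymbol\xi\in\mathfrak g^n$; strong topology: seminorms $\sup_{\boldsymbol\xi\in B}\|\pi_n(\boldsymbol\xi)\psi\|$, $B\subseteq\mathfrak g^n$ bounded. $C^n$-curves into a locally convex space: iterated derivatives (limits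 of difference quotients) up to order $n$ exist and are continuous. *)

theory Defs
  imports "HOL-Analysis.Analysis" "HOL-Library.Extended_Nat"
begin

class complex_vector = real_vector +
  fixes scaleC :: "complex \<Rightarrow> 'a \<Rightarrow> 'a"  (infixr \<open>*\<^sub>C\<close> 75)
  assumes scaleC_add_right: "a *\<^sub>C (x + y) = a *\<^sub>C x + a *\<^sub>C y"
    and scaleC_add_left: "(a + b) *\<^sub>C x = a *\<^sub>C x + b *\<^sub>C x"
    and scaleC_scaleC: "a *\<^sub>C (b *\<^sub>C x) = (a * b) *\<^sub>C x"
    and scaleC_one: "1 *\<^sub>C x = x"
    and scaleR_scaleC: "scaleR r x = complex_of_real r *\<^sub>C x"

text \<open>Convention: linear in the first, conjugate-linear in the second argument.\<close>
class complex_inner = complex_vector + real_normed_vector +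
  fixes cinner :: "'a \<Rightarrow> 'a \<Rightarrow> complex"
  assumes cinner_add_left: "cinner (x + y) z = cinner x z + cinner y z"
    and cinner_scaleC_left: "cinner (c *\<^sub>C x) y = c * cinner x y"
    and cinner_commute: "cinner y x = cnj (cinner x y)"
    and cinner_nonneg: "0 \<le> Re (cinner x x)"
    and norm_cinner: "norm x = sqrt (Re (cinner x x))"

definition lc_lie_algebra :: "('g::{real_vector,t2_space} \<Rightarrow> 'g \<Rightarrow> 'g) \<Rightarrow> bool" where
  "lc_lie_algebra br \<longleftrightarrow>
     continuous_on UNIV (\<lambda>z::'g \<times> 'g. fst z + snd z) \<and>
     continuous_on UNIV (\<lambda>z::real \<times> 'g. fst z *\<^sub>R snd z) \<and>
     (\<forall>U. open U \<and> (0::'g) \<in> U \<longrightarrow> (\<exists>W. open W \<and> convex W \<and> 0 \<in> W \<and> W \<subseteq> U)) \<and>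
     bilinear br \<and>
     (\<forall>x. br x x = 0) \<and>
     (\<forall>x y z. br x (br y z) + br y (br z x) + br z (br x y) = 0) \<and>
     continuous_on UNIV (\<lambda>z::'g \<times> 'g. br (fst z) (snd z))"

definition circled :: "'a::real_vector set \<Rightarrow> bool" where
  "circled B \<longleftrightarrow> (\<forall>c::real. \<bar>c\<bar> \<le> 1 \<longrightarrow> (\<lambda>x. c *\<^sub>R x) ` B \<subseteq> B)"

definition absorbing :: "'a::real_vector set \<Rightarrow> bool" where
  "absorbing B \<longleftrightarrow> (\<forall>x. \<exists>r>0. \<forall>c::real. \<bar>c\<bar> \<le> r \<longrightarrow> c *\<^sub>R x \<in> B)"

definition barrelled :: "'a::{real_vector,topological_space} itself \<Rightarrow> bool" where
  "barrelled _ \<longleftrightarrow> (\<forall>B::'a set. closed B \<and> convex B \<and> circled B \<and> absorbing B \<longrightarrow>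
      (\<exists>U. open U \<and> 0 \<in> U \<and> U \<subseteq> B))"

definition tvs_bounded :: "'a::{real_vector,topological_space} set \<Rightarrow> bool" where
  "tvs_bounded S \<longleftrightarrow> (\<forall>U. open U \<and> 0 \<in> U \<longrightarrow>
      (\<exists>s>0. \<forall>t::real. t > s \<longrightarrow> S \<subseteq> (\<lambda>x. t *\<^sub>R x) ` U))"

text \<open>Elements of g^n are represented as lists of length n.  A subset of the
  product is bounded iff all its coordinate projections are bounded.\<close>
definition gn_bounded :: "nat \<Rightarrow> 'a::{real_vector,topological_space} list set \<Rightarrow> bool" where
  "gn_bounded n B \<longleftrightarrow> (\<forall>xs\<in>B. length xs = n) \<and> (\<forall>i<n. tvs_bounded ((\<lambda>xs. xs ! i) ` B))"

text \<open>pin \<pi> [xi_n,...,xi_1] \<psi> = pi(xi_n)...pi(xi_1)\<psi>; the empty list gives the identity.\<close>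
fun pin :: "('g \<Rightarrow> 'v \<Rightarrow> 'v) \<Rightarrow> 'g list \<Rightarrow> 'v \<Rightarrow> 'v" where
  "pin \<pi> [] \<psi> = \<psi>"
| "pin \<pi> (x # xs) \<psi> = \<pi> x (pin \<pi> xs \<psi>)"

definition unitary_rep :: "('g::real_vector \<Rightarrow> 'g \<Rightarrow> 'g) \<Rightarrow> ('g \<Rightarrow> 'v::complex_inner \<Rightarrow> 'v) \<Rightarrow> bool" where
  "unitary_rep br \<pi> \<longleftrightarrow>
     (\<forall>\<psi>. linear (\<lambda>\<xi>. \<pi> \<xi> \<psi>)) \<and>
     (\<forall>\<xi> \<psi> \<phi>. \<pi> \<xi> (\<psi> + \<phi>) = \<pi> \<xi> \<psi> + \<pi> \<xi> \<phi>) \<and>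
     (\<forall>\<xi> c \<psi>. \<pi> \<xi> (c *\<^sub>C \<psi>) = c *\<^sub>C \<pi> \<xi> \<psi>) \<and>
     (\<forall>\<xi> \<eta> \<psi>. \<pi> (br \<xi> \<eta>) \<psi> = \<pi> \<xi> (\<pi> \<eta> \<psi>) - \<pi> \<eta> (\<pi> \<xi> \<psi>)) \<and>
     (\<forall>\<xi> \<psi> \<phi>. cinner (\<pi> \<xi> \<psi>) \<phi> = - cinner \<psi> (\<pi> \<xi> \<phi>))"

text \<open>Continuity: for all n and \<psi>, the map g^n \<rightarrow> V is continuous for the product
  topology and the norm topology (equivalently, into the completion).\<close>
definition continuous_rep :: "('g::{real_vector,topological_space} \<Rightarrow> 'v::complex_inner \<Rightarrow> 'v) \<Rightarrow> bool" where
  "continuous_rep \<pi> \<longleftrightarrow> (\<forall>n \<psi>.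
     continuous_map (product_topology (\<lambda>_. (euclidean :: 'g topology)) {..<n}) (euclidean :: 'v topology)
       (\<lambda>x. pin \<pi> (map x [0..<n]) \<psi>))"

definition seminorm_topology :: "('v::real_vector \<Rightarrow> ereal) set \<Rightarrow> 'v topology" where
  "seminorm_topology S = topology (\<lambda>U. \<forall>x\<in>U. \<exists>F \<epsilon>. finite F \<and> F \<subseteq> S \<and> \<epsilon> > 0 \<and>
      {y. \<forall>p\<in>F. p (y - x) < ereal \<epsilon>} \<subseteq> U)"

definition weak_top :: "('g \<Rightarrow> 'v::complex_inner \<Rightarrow> 'v) \<Rightarrow> 'v topology" where
  "weak_top \<pi> = seminorm_topology {(\<lambda>\<psi>. ereal (norm (pin \<pi> xs \<psi>))) | xs. True}"

definition strong_top :: "('g::{real_vector,topological_space} \<Rightarrow> 'v::complex_inner \<Rightarrow> 'v) \<Rightarrow> 'v topology" where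
  "strong_top \<pi> = seminorm_topology
     {(\<lambda>\<psi>. SUP xs\<in>B. ereal (norm (pin \<pi> xs \<psi>))) | n B. gn_bounded n B}"

text \<open>A curve \<gamma> is C^n iff
  such a family with D 0 = \<gamma> on I exists; D k is then its k-th derivative.\<close>
definition Cn_family :: "'v::real_vector topology \<Rightarrow> real set \<Rightarrow> enat \<Rightarrow> (nat \<Rightarrow> real \<Rightarrow> 'v) \<Rightarrow> bool" where
  "Cn_family X I n D \<longleftrightarrow>
     (\<forall>k. enat k \<le> n \<longrightarrow> continuous_map (top_of_set I) X (D k)) \<and>
     (\<forall>k. enat k < n \<longrightarrow> (\<forall>t\<in>I.
        limitin X (\<lambda>s. inverse (s - t) *\<^sub>R (D k s - D k t)) (D (Suc k) t) (at t within I)))"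

end

theory Submission
  imports Defs
begin

lemma atin_within_eucl: "atin_within euclidean a S = at a within S"
proof -
  have "eventually P (atin_within euclidean a S) \<longleftrightarrow> eventually P (at a within S)" for P
    by (simp add: eventually_atin_within eventually_at_topological) (metis)
  then show ?thesis by (meson le_filter_def order.eq_iff)
qed

lemma cmap_limit:
  assumes "continuous_map (top_of_set I) X f" "t \<in> I"
  shows "limitin X f (f t) (at t within I)"
  using limitin_continuous_map[OF assms(1)] assms(2)
  by (simp add: atin_subtopology_within atin_within_eucl)

lemma limit_cmap:
  assumes "\<And>t. t \<in> I \<Longrightarrow> limitin X f (f t) (at t within (I::real set))"
  shows "continuous_map (top_of_set I) X f"
  unfolding continuous_map_atin using assms
  by (simp add: atin_subtopology_within atin_within_eucl)

context
  fixes br :: "'g::real_vector \<Rightarrow> 'g \<Rightarrow> 'g" and \<pi> :: "'g \<Rightarrow> 'v::complex_inner \<Rightarrow> 'v"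
  assumes U: "unitary_rep br \<pi>"
begin

lemma pi_add_v: "\<pi> x (a + b) = \<pi> x a + \<pi> x b"
  using U unfolding unitary_rep_def by blast

lemma pi_scale_v: "\<pi> x (c *\<^sub>R a) = c *\<^sub>R \<pi> x a"
  using U unfolding unitary_rep_def by (simp add: scaleR_scaleC)

lemma pi_lin: "linear (\<lambda>x. \<pi> x a)"
  using U unfolding unitary_rep_def by blast

lemma pi_add_x: "\<pi> (x + y) a = \<pi> x a + \<pi> y a"
  using linear_add[OF pi_lin] by blast
lemma pi_scale_x: "\<pi> (c *\<^sub>R x) a = c *\<^sub>R \<pi> x a"
  using linear_scale[OF pi_lin] by blast
lemma pi_diff_x: "\<pi> (x - y) a = \<pi> x a - \<pi> y a"
  using linear_diff[OF pi_lin] by blast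

lemma pin_add: "pin \<pi> xs (a + b) = pin \<pi> xs a + pin \<pi> xs b"
  by (induction xs) (auto simp: pi_add_v)
lemma pin_scale: "pin \<pi> xs (c *\<^sub>R a) = c *\<^sub>R pin \<pi> xs a"
  by (induction xs) (auto simp: pi_scale_v)
lemma pin_diff: "pin \<pi> xs (a - b) = pin \<pi> xs a - pin \<pi> xs b"
  using pin_add[of xs a "(-1) *\<^sub>R b"] pin_scale[of xs "-1" b] by simp
lemma pin_zero: "pin \<pi> xs 0 = 0"
  using pin_scale[of xs 0 0] by simp
lemma pin_append: "pin \<pi> (xs @ ys) a = pin \<pi> xs (pin \<pi> ys a)"
  by (induction xs) auto
lemma pin_snoc: "pin \<pi> (xs @ [x]) a = pin \<pi> xs (\<pi> x a)"
  by (simp add: pin_append)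
lemma pin_scale_list: "pin \<pi> (map (\<lambda>y. c *\<^sub>R y) ys) a = (c ^ length ys) *\<^sub>R pin \<pi> ys a"
  by (induction ys) (auto simp: pi_scale_x pi_scale_v)

lemma T_lin_scale: "pin \<pi> xs (\<pi> (c *\<^sub>R x) a) = c *\<^sub>R pin \<pi> xs (\<pi> x a)"
  by (simp add: pi_scale_x pin_scale)
lemma T_lin_add: "pin \<pi> xs (\<pi> (x + y) a) = pin \<pi> xs (\<pi> x a) + pin \<pi> xs (\<pi> y a)"
  by (simp add: pi_add_x pin_add)

end

definition sp :: "('g \<Rightarrow> 'v::complex_inner \<Rightarrow> 'v) \<Rightarrow> 'g list set \<Rightarrow> 'v \<Rightarrow> real" where
  "sp \<pi> B v = real_of_ereal (SUP xs\<in>B. ereal (norm (pin \<pi> xs v)))"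

definition finB :: "('g \<Rightarrow> 'v::complex_inner \<Rightarrow> 'v) \<Rightarrow> 'g list set \<Rightarrow> bool" where
  "finB \<pi> B \<longleftrightarrow> (\<forall>v. (SUP xs\<in>B. ereal (norm (pin \<pi> xs v))) < \<infinity>)"

lemma ereal_fin_aux: "0 \<le> (x::ereal) \<Longrightarrow> x < \<infinity> \<Longrightarrow> x = ereal (real_of_ereal x)"
  by (cases x) auto

lemma sp_ereal:
  assumes "finB \<pi> B" "B \<noteq> {}"
  shows "(SUP xs\<in>B. ereal (norm (pin \<pi> xs v))) = ereal (sp \<pi> B v)"
proof -
  obtain x where x: "x \<in> B" using assms(2) by blast
  have "ereal 0 \<le> ereal (norm (pin \<pi> x v))" by simp
  also have "\<dots> \<le> (SUP xs\<in>B. ereal (norm (pin \<pi> xs v)))" using x by (rule SUP_upper)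
  finally have "0 \<le> (SUP xs\<in>B. ereal (norm (pin \<pi> xs v)))" by (simp add: zero_ereal_def)
  moreover have "(SUP xs\<in>B. ereal (norm (pin \<pi> xs v))) < \<infinity>" using assms(1) finB_def by blast
  ultimately show ?thesis unfolding sp_def using ereal_fin_aux by blast
qed

lemma sp_le_iff:
  assumes "finB \<pi> B" "0 \<le> M"
  shows "sp \<pi> B v \<le> M \<longleftrightarrow> (\<forall>xs\<in>B. norm (pin \<pi> xs v) \<le> M)"
proof (cases "B = {}")
  case True then show ?thesis using assms by (simp add: sp_def bot_ereal_def)
next
  case False
  have "sp \<pi> B v \<le> M \<longleftrightarrow> ereal (sp \<pi> B v) \<le> ereal M" by simp
  also have "\<dots> \<longleftrightarrow> (SUP xs\<in>B. ereal (norm (pin \<pi> xs v))) \<le> ereal M"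
    using sp_ereal[OF assms(1) False] by simp
  also have "\<dots> \<longleftrightarrow> (\<forall>xs\<in>B. norm (pin \<pi> xs v) \<le> M)" by (simp add: SUP_le_iff)
  finally show ?thesis .
qed

lemma sp_lt_iff:
  assumes "finB \<pi> B" "0 < e"
  shows "(SUP xs\<in>B. ereal (norm (pin \<pi> xs v))) < ereal e \<longleftrightarrow> sp \<pi> B v < e"
proof (cases "B = {}")
  case True then show ?thesis using assms by (simp add: sp_def bot_ereal_def)
next
  case False then show ?thesis using sp_ereal[OF assms(1) False] by simp
qed

lemma sp_nonneg: "0 \<le> sp \<pi> B v"
  unfolding sp_def
proof (cases "B = {}")
  case False
  then obtain x where x: "x \<in> B" by blast
  have "ereal 0 \<le> ereal (norm (pin \<pi> x v))" by simp
  also have "\<dots> \<le> (SUP xs\<in>B. ereal (norm (pin \<pi> xs v)))" using x by (rule SUP_upper)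
  finally show "0 \<le> real_of_ereal (SUP xs\<in>B. ereal (norm (pin \<pi> xs v)))"
    by (intro real_of_ereal_pos) (simp add: zero_ereal_def)
qed (simp add: bot_ereal_def)

lemma sp_upper:
  assumes "finB \<pi> B" "xs \<in> B"
  shows "norm (pin \<pi> xs v) \<le> sp \<pi> B v"
  using sp_le_iff[OF assms(1) sp_nonneg, of v] assms(2) by blast

context
  fixes br :: "'g::real_vector \<Rightarrow> 'g \<Rightarrow> 'g" and \<pi> :: "'g \<Rightarrow> 'v::complex_inner \<Rightarrow> 'v"
  assumes U: "unitary_rep br \<pi>"
begin

lemma sp_tri:
  assumes "finB \<pi> B"
  shows "sp \<pi> B (a + b) \<le> sp \<pi> B a + sp \<pi> B b"
proof -
  have "norm (pin \<pi> xs (a + b)) \<le> sp \<pi> B a + sp \<pi> B b" if "xs \<in> B" for xs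
  proof -
    have "norm (pin \<pi> xs (a + b)) \<le> norm (pin \<pi> xs a) + norm (pin \<pi> xs b)"
      by (simp add: pin_add[OF U] norm_triangle_ineq)
    also have "\<dots> \<le> sp \<pi> B a + sp \<pi> B b"
      using sp_upper[OF assms that] by (simp add: add_mono)
    finally show ?thesis .
  qed
  moreover have "0 \<le> sp \<pi> B a + sp \<pi> B b" by (simp add: sp_nonneg add_nonneg_nonneg)
  ultimately show ?thesis using sp_le_iff[OF assms] by blast
qed

lemma sp_scale:
  assumes "finB \<pi> B"
  shows "sp \<pi> B (c *\<^sub>R a) \<le> \<bar>c\<bar> * sp \<pi> B a"
proof -
  have "norm (pin \<pi> xs (c *\<^sub>R a)) \<le> \<bar>c\<bar> * sp \<pi> B a" if "xs \<in> B" for xs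
    using sp_upper[OF assms that, of a]
    by (simp add: pin_scale[OF U] mult_left_mono)
  moreover have "0 \<le> \<bar>c\<bar> * sp \<pi> B a" by (simp add: sp_nonneg)
  ultimately show ?thesis using sp_le_iff[OF assms] by blast
qed

lemma sp_zero:
  assumes "finB \<pi> B"
  shows "sp \<pi> B 0 = 0"
  using sp_le_iff[OF assms, of 0 0] sp_nonneg[of \<pi> B 0] by (simp add: pin_zero[OF U])

lemma sp_pi:
  assumes "finB \<pi> B" "finB \<pi> ((\<lambda>xs. xs @ [x]) ` B)"
  shows "sp \<pi> B (\<pi> x a) \<le> sp \<pi> ((\<lambda>xs. xs @ [x]) ` B) a"
proof -
  have "norm (pin \<pi> xs (\<pi> x a)) \<le> sp \<pi> ((\<lambda>xs. xs @ [x]) ` B) a" if "xs \<in> B" for xs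
    using sp_upper[OF assms(2), of "xs @ [x]" a] that by (simp add: pin_snoc[OF U])
  then show ?thesis using sp_le_iff[OF assms(1)] sp_nonneg by blast
qed

end

lemma pascal_sum:
  fixes f :: "nat \<Rightarrow> nat \<Rightarrow> 'a::real_vector"
  shows "(\<Sum>j\<le>k. real (k choose j) *\<^sub>R (f (Suc j) (k - j) + f j (Suc (k - j))))
       = (\<Sum>j\<le>Suc k. real (Suc k choose j) *\<^sub>R f j (Suc k - j))"
proof -
  have r1: "(\<Sum>j\<le>Suc k. real (Suc k choose j) *\<^sub>R f j (Suc k - j))
      = f 0 (Suc k) + (\<Sum>j\<le>k. real (k choose j) *\<^sub>R f (Suc j) (k - j))
          + (\<Sum>j\<le>k. real (k choose Suc j) *\<^sub>R f (Suc j) (k - j))"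
    by (simp add: sum.atMost_Suc_shift scaleR_add_left sum.distrib algebra_simps del: sum.atMost_Suc)
  have "(\<Sum>j\<le>Suc k. real (k choose j) *\<^sub>R f j (Suc k - j))
      = f 0 (Suc k) + (\<Sum>j\<le>k. real (k choose Suc j) *\<^sub>R f (Suc j) (k - j))"
    by (simp add: sum.atMost_Suc_shift del: sum.atMost_Suc)
  moreover have "(\<Sum>j\<le>Suc k. real (k choose j) *\<^sub>R f j (Suc k - j))
      = (\<Sum>j\<le>k. real (k choose j) *\<^sub>R f j (Suc (k - j)))"
    by (simp add: Suc_diff_le)
  ultimately have r2: "(\<Sum>j\<le>k. real (k choose j) *\<^sub>R f j (Suc (k - j)))
      = f 0 (Suc k) + (\<Sum>j\<le>k. real (k choose Suc j) *\<^sub>R f (Suc j) (k - j))" by simp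
  show ?thesis unfolding r1 by (simp add: scaleR_add_right sum.distrib r2 algebra_simps)
qed

definition semS :: "('g \<Rightarrow> 'v::complex_inner \<Rightarrow> 'v) \<Rightarrow> 'g list set set \<Rightarrow> ('v \<Rightarrow> ereal) set" where
  "semS \<pi> \<B> = {(\<lambda>\<psi>. SUP xs\<in>B. ereal (norm (pin \<pi> xs \<psi>))) | B. B \<in> \<B>}"

definition conv :: "('g \<Rightarrow> 'v::complex_inner \<Rightarrow> 'v) \<Rightarrow> 'g list set set \<Rightarrow> ('a \<Rightarrow> 'v) \<Rightarrow> 'v \<Rightarrow> 'a filter \<Rightarrow> bool" where
  "conv \<pi> \<B> f l F \<longleftrightarrow> (\<forall>B\<in>\<B>. ((\<lambda>x. sp \<pi> B (f x - l)) \<longlongrightarrow> 0) F)"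

lemma tendsto0_nonneg_iff:
  assumes "\<And>x. 0 \<le> (g x::real)"
  shows "(g \<longlongrightarrow> 0) F \<longleftrightarrow> (\<forall>e>0. eventually (\<lambda>x. g x < e) F)"
  unfolding tendsto_iff dist_real_def using assms by simp

lemma istop_sem: "istopology (\<lambda>U. \<forall>x\<in>U. \<exists>F \<epsilon>. finite F \<and> F \<subseteq> S \<and> \<epsilon> > 0 \<and>
      {y. \<forall>p\<in>F. p (y - x) < ereal \<epsilon>} \<subseteq> U)" (is "istopology ?P")
  unfolding istopology_def
proof (intro conjI allI impI)
  fix U V assume U: "?P U" and V: "?P V"
  show "?P (U \<inter> V)"
  proof
    fix x assume x: "x \<in> U \<inter> V"
    have xU: "x \<in> U" and xV: "x \<in> V" using x by auto
    from bspec[OF U xU] obtain F1 e1 where 1: "finite F1" "F1 \<subseteq> S" "e1 > 0" "{y. \<forall>p\<in>F1. p (y - x) < ereal e1} \<subseteq> U"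
      by blast
    from bspec[OF V xV] obtain F2 e2 where 2: "finite F2" "F2 \<subseteq> S" "e2 > 0" "{y. \<forall>p\<in>F2. p (y - x) < ereal e2} \<subseteq> V"
      by blast
    have "{y. \<forall>p\<in>F1 \<union> F2. p (y - x) < ereal (min e1 e2)} \<subseteq> U \<inter> V"
    proof
      fix y assume y: "y \<in> {y. \<forall>p\<in>F1 \<union> F2. p (y - x) < ereal (min e1 e2)}"
      have a: "\<forall>p\<in>F1. p (y - x) < ereal e1"
      proof
        fix p assume "p \<in> F1"
        then have "p (y - x) < ereal (min e1 e2)" using y by blast
        also have "\<dots> \<le> ereal e1" by simp
        finally show "p (y - x) < ereal e1" .
      qed
      have b: "\<forall>p\<in>F2. p (y - x) < ereal e2"
      proof
        fix p assume "p \<in> F2"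
        then have "p (y - x) < ereal (min e1 e2)" using y by blast
        also have "\<dots> \<le> ereal e2" by simp
        finally show "p (y - x) < ereal e2" .
      qed
      have "y \<in> U" using a 1(4) by blast
      moreover have "y \<in> V" using b 2(4) by blast
      ultimately show "y \<in> U \<inter> V" by simp
    qed
    moreover have "finite (F1 \<union> F2)" "F1 \<union> F2 \<subseteq> S" "min e1 e2 > 0" using 1 2 by auto
    ultimately show "\<exists>F \<epsilon>. finite F \<and> F \<subseteq> S \<and> \<epsilon> > 0 \<and> {y. \<forall>p\<in>F. p (y - x) < ereal \<epsilon>} \<subseteq> U \<inter> V"
      by (intro exI[of _ "F1 \<union> F2"] exI[of _ "min e1 e2"] conjI)
  qed
next
  fix K assume K: "\<forall>U\<in>K. ?P U"
  show "?P (\<Union>K)"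
  proof
    fix x assume "x \<in> \<Union>K"
    then obtain U where UK: "U \<in> K" and xU: "x \<in> U" by blast
    from bspec[OF bspec[OF K UK] xU] obtain F e where FF: "finite F" "F \<subseteq> S" "e > 0" "{y. \<forall>p\<in>F. p (y - x) < ereal e} \<subseteq> U"
      by blast
    have UK2: "U \<subseteq> \<Union>K" using UK by blast
    have "{y. \<forall>p\<in>F. p (y - x) < ereal e} \<subseteq> \<Union>K" by (rule subset_trans[OF FF(4) UK2])
    then show "\<exists>F \<epsilon>. finite F \<and> F \<subseteq> S \<and> \<epsilon> > 0 \<and> {y. \<forall>p\<in>F. p (y - x) < ereal \<epsilon>} \<subseteq> \<Union>K"
      using FF by (intro exI[of _ F] exI[of _ e] conjI)
  qed
qed

lemma openin_sem: "openin (seminorm_topology S) U \<longleftrightarrow> (\<forall>x\<in>U. \<exists>F \<epsilon>. finite F \<and> F \<subseteq> S \<and> \<epsilon> > 0 \<and>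
      {y. \<forall>p\<in>F. p (y - x) < ereal \<epsilon>} \<subseteq> U)"
  unfolding seminorm_topology_def by (rule fun_cong[OF topology_inverse'[OF istop_sem]])

lemma topspace_sem: "topspace (seminorm_topology S) = UNIV"
proof -
  have "openin (seminorm_topology S) UNIV" unfolding openin_sem
    by (intro ballI exI[of _ "{}"] exI[of _ 1]) auto
  then show ?thesis by (meson openin_subset top.extremum_uniqueI)
qed

context
  fixes br :: "'g::real_vector \<Rightarrow> 'g \<Rightarrow> 'g" and \<pi> :: "'g \<Rightarrow> 'v::complex_inner \<Rightarrow> 'v"
    and \<B> :: "'g list set set"
  assumes U: "unitary_rep br \<pi>" and fin: "\<And>B. B \<in> \<B> \<Longrightarrow> finB \<pi> B"
begin

lemma limitin_sem_iff:
  "limitin (seminorm_topology (semS \<pi> \<B>)) f l F \<longleftrightarrow> conv \<pi> \<B> f l F"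
proof
  assume L: "limitin (seminorm_topology (semS \<pi> \<B>)) f l F"
  show "conv \<pi> \<B> f l F" unfolding conv_def
  proof
    fix B assume B: "B \<in> \<B>"
    note finB = fin[OF B]
    show "((\<lambda>x. sp \<pi> B (f x - l)) \<longlongrightarrow> 0) F"
      unfolding tendsto0_nonneg_iff[OF sp_nonneg]
    proof (intro allI impI)
      fix e :: real assume e: "e > 0"
      define W where "W = {y. sp \<pi> B (y - l) < e}"
      have "openin (seminorm_topology (semS \<pi> \<B>)) W" unfolding openin_sem
      proof
        fix y assume "y \<in> W"
        then have y: "sp \<pi> B (y - l) < e" by (simp add: W_def)
        define d where "d = e - sp \<pi> B (y - l)"
        have d: "d > 0" using y by (simp add: d_def)
        have "{z. \<forall>p\<in>{\<lambda>\<psi>. SUP xs\<in>B. ereal (norm (pin \<pi> xs \<psi>))}. p (z - y) < ereal d} \<subseteq> W"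
        proof
          fix z assume "z \<in> {z. \<forall>p\<in>{\<lambda>\<psi>. SUP xs\<in>B. ereal (norm (pin \<pi> xs \<psi>))}. p (z - y) < ereal d}"
          then have "sp \<pi> B (z - y) < d" using sp_lt_iff[OF finB d] by simp
          moreover have "sp \<pi> B (z - l) \<le> sp \<pi> B (z - y) + sp \<pi> B (y - l)"
            using sp_tri[OF U finB, of "z - y" "y - l"] by simp
          ultimately show "z \<in> W" by (simp add: W_def d_def)
        qed
        moreover have "{\<lambda>\<psi>. SUP xs\<in>B. ereal (norm (pin \<pi> xs \<psi>))} \<subseteq> semS \<pi> \<B>"
          using B by (auto simp: semS_def)
        ultimately show "\<exists>F \<epsilon>. finite F \<and> F \<subseteq> semS \<pi> \<B> \<and> \<epsilon> > 0 \<and> {z. \<forall>p\<in>F. p (z - y) < ereal \<epsilon>} \<subseteq> W"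
          using d by blast
      qed
      moreover have "l \<in> W" using e sp_zero[OF U finB] by (simp add: W_def)
      ultimately have "eventually (\<lambda>x. f x \<in> W) F" using L by (simp add: limitin_def)
      then show "eventually (\<lambda>x. sp \<pi> B (f x - l) < e) F" by (simp add: W_def)
    qed
  qed
next
  assume C: "conv \<pi> \<B> f l F"
  show "limitin (seminorm_topology (semS \<pi> \<B>)) f l F"
    unfolding limitin_def topspace_sem
  proof (intro conjI allI impI)
    fix W assume W: "openin (seminorm_topology (semS \<pi> \<B>)) W \<and> l \<in> W"
    then obtain G e where G: "finite G" "G \<subseteq> semS \<pi> \<B>" "e > 0" "{y. \<forall>p\<in>G. p (y - l) < ereal e} \<subseteq> W"
      unfolding openin_sem by blast
    have "eventually (\<lambda>x. p (f x - l) < ereal e) F" if pG: "p \<in> G" for p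
    proof -
      obtain B where B: "B \<in> \<B>" "p = (\<lambda>\<psi>. SUP xs\<in>B. ereal (norm (pin \<pi> xs \<psi>)))"
      proof -
        have "p \<in> semS \<pi> \<B>" using G(2) pG by blast
        then show ?thesis unfolding semS_def using that by blast
      qed
      have "eventually (\<lambda>x. sp \<pi> B (f x - l) < e) F"
        using C B(1) G(3) unfolding conv_def tendsto0_nonneg_iff[OF sp_nonneg] by blast
      then show ?thesis using sp_lt_iff[OF fin[OF B(1)] G(3)] B(2) by simp
    qed
    then have "eventually (\<lambda>x. \<forall>p\<in>G. p (f x - l) < ereal e) F"
      using G(1) by (simp add: eventually_ball_finite)
    then show "eventually (\<lambda>x. f x \<in> W) F" by (rule eventually_mono) (use G(4) in blast)
  qed simp
qed

lemma conv_add: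
  assumes "conv \<pi> \<B> f l F" "conv \<pi> \<B> g m F"
  shows "conv \<pi> \<B> (\<lambda>x. f x + g x) (l + m) F"
  unfolding conv_def
proof
  fix B assume B: "B \<in> \<B>"
  have t1: "((\<lambda>x. sp \<pi> B (f x - l)) \<longlongrightarrow> 0) F" using assms(1) B unfolding conv_def by blast
  have t2: "((\<lambda>x. sp \<pi> B (g x - m)) \<longlongrightarrow> 0) F" using assms(2) B unfolding conv_def by blast
  have t3: "((\<lambda>x. sp \<pi> B (f x - l) + sp \<pi> B (g x - m)) \<longlongrightarrow> 0) F"
    using tendsto_add[OF t1 t2] by simp
  have le: "sp \<pi> B (f x + g x - (l + m)) \<le> sp \<pi> B (f x - l) + sp \<pi> B (g x - m)" for x
  proof -
    have e: "f x + g x - (l + m) = (f x - l) + (g x - m)" by (simp add: algebra_simps)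
    show ?thesis unfolding e by (rule sp_tri[OF U fin[OF B]])
  qed
  show "((\<lambda>x. sp \<pi> B (f x + g x - (l + m))) \<longlongrightarrow> 0) F"
    by (rule tendsto_sandwich[OF always_eventually always_eventually tendsto_const t3])
       (use le sp_nonneg in blast)+
qed

lemma conv_scale:
  assumes "conv \<pi> \<B> f l F"
  shows "conv \<pi> \<B> (\<lambda>x. c *\<^sub>R f x) (c *\<^sub>R l) F"
  unfolding conv_def
proof
  fix B assume B: "B \<in> \<B>"
  have t1: "((\<lambda>x. sp \<pi> B (f x - l)) \<longlongrightarrow> 0) F" using assms(1) B unfolding conv_def by blast
  have t3: "((\<lambda>x. \<bar>c\<bar> * sp \<pi> B (f x - l)) \<longlongrightarrow> 0) F"
    using tendsto_mult[OF tendsto_const t1, of "\<bar>c\<bar>"] by simp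
  have le: "sp \<pi> B (c *\<^sub>R f x - c *\<^sub>R l) \<le> \<bar>c\<bar> * sp \<pi> B (f x - l)" for x
  proof -
    have e: "c *\<^sub>R f x - c *\<^sub>R l = c *\<^sub>R (f x - l)" by (simp add: algebra_simps)
    show ?thesis unfolding e by (rule sp_scale[OF U fin[OF B]])
  qed
  show "((\<lambda>x. sp \<pi> B (c *\<^sub>R f x - c *\<^sub>R l)) \<longlongrightarrow> 0) F"
    by (rule tendsto_sandwich[OF always_eventually always_eventually tendsto_const t3])
       (use le sp_nonneg in blast)+
qed

lemma conv_const: "conv \<pi> \<B> (\<lambda>x. l) l F"
  unfolding conv_def
proof
  fix B assume "B \<in> \<B>"
  then have "sp \<pi> B 0 = 0" using sp_zero[OF U fin] by blast
  then show "((\<lambda>x. sp \<pi> B (l - l)) \<longlongrightarrow> 0) F" by simp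
qed

lemma conv_sum:
  assumes "finite J" "\<And>j. j \<in> J \<Longrightarrow> conv \<pi> \<B> (f j) (l j) F"
  shows "conv \<pi> \<B> (\<lambda>x. \<Sum>j\<in>J. f j x) (\<Sum>j\<in>J. l j) F"
  using assms
proof (induction J rule: finite_induct)
  case empty then show ?case using conv_const by simp
next
  case (insert a J)
  then have "conv \<pi> \<B> (\<lambda>x. f a x + (\<Sum>j\<in>J. f j x)) (l a + (\<Sum>j\<in>J. l j)) F"
    by (intro conv_add) auto
  then show ?case using insert(1,2) by simp
qed

end

context
  fixes br :: "'g::{real_vector,t2_space} \<Rightarrow> 'g \<Rightarrow> 'g"
  assumes L: "lc_lie_algebra br"
begin

lemma g_scale_tendsto:
  assumes "(f \<longlongrightarrow> a) F"
  shows "((\<lambda>x. c *\<^sub>R (f x::'g)) \<longlongrightarrow> c *\<^sub>R a) F"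
proof -
  have c: "continuous_on UNIV (\<lambda>z::real \<times> 'g. fst z *\<^sub>R snd z)" using L unfolding lc_lie_algebra_def by blast
  have "((\<lambda>x. (c, f x)) \<longlongrightarrow> (c, a)) F" by (intro tendsto_Pair tendsto_const assms)
  from continuous_on_tendsto_compose[OF c this] show ?thesis by simp
qed

lemma g_add_tendsto:
  assumes "(f \<longlongrightarrow> a) F" "(g \<longlongrightarrow> b) F"
  shows "((\<lambda>x. (f x::'g) + g x) \<longlongrightarrow> a + b) F"
proof -
  have c: "continuous_on UNIV (\<lambda>z::'g \<times> 'g. fst z + snd z)" using L unfolding lc_lie_algebra_def by blast
  have "((\<lambda>x. (f x, g x)) \<longlongrightarrow> (a, b)) F" by (intro tendsto_Pair assms)
  from continuous_on_tendsto_compose[OF c this] show ?thesis by simp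
qed

lemma g_diff_tendsto:
  assumes "(f \<longlongrightarrow> a) F" "(g \<longlongrightarrow> b) F"
  shows "((\<lambda>x. (f x::'g) - g x) \<longlongrightarrow> a - b) F"
  using g_add_tendsto[OF assms(1) g_scale_tendsto[OF assms(2), of "-1"]] by simp

end

lemma cont_slice:
  fixes \<pi> :: "'g::{real_vector,topological_space} \<Rightarrow> 'v::complex_inner \<Rightarrow> 'v"
  assumes C: "continuous_rep \<pi>"
  shows "continuous_on UNIV (\<lambda>y. pin \<pi> (xs @ [y]) v)"
proof -
  define N where "N = Suc (length xs)"
  have c1: "continuous_map (product_topology (\<lambda>_. (euclidean :: 'g topology)) {..<N}) (euclidean :: 'v topology)
       (\<lambda>x. pin \<pi> (map x [0..<N]) v)" using C unfolding continuous_rep_def by blast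
  define h where "h y = (\<lambda>i\<in>{..<N}. if i < length xs then xs ! i else y)" for y :: 'g
  have c2: "continuous_map euclidean (product_topology (\<lambda>_. (euclidean :: 'g topology)) {..<N}) h"
    unfolding continuous_map_componentwise
  proof (intro conjI ballI)
    show "h ` topspace euclidean \<subseteq> extensional {..<N}" by (auto simp: h_def)
  next
    fix k assume "k \<in> {..<N}"
    then show "continuous_map euclidean euclidean (\<lambda>x. h x k)"
      by (cases "k < length xs") (simp_all add: h_def)
  qed
  have m: "map (h y) [0..<N] = xs @ [y]" for y
    by (rule nth_equalityI) (auto simp: h_def N_def nth_append less_Suc_eq)
  from continuous_map_compose[OF c2 c1] show ?thesis by (simp add: o_def m)
qed

context
  fixes br :: "'g::{real_vector,t2_space} \<Rightarrow> 'g \<Rightarrow> 'g" and \<pi> :: "'g \<Rightarrow> 'v::complex_inner \<Rightarrow> 'v"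
  assumes L: "lc_lie_algebra br" and Ba: "barrelled TYPE('g)" and U: "unitary_rep br \<pi>"
    and C: "continuous_rep \<pi>"
begin

lemma seq_lemma:
  fixes \<eta> :: "nat \<Rightarrow> 'g" and v :: "nat \<Rightarrow> 'v" and B :: "'g list set"
  assumes eta: "\<eta> \<longlonglongrightarrow> 0"
    and bd: "\<And>y. \<exists>M. \<forall>m. \<forall>xs\<in>B. norm (pin \<pi> xs (\<pi> y (v m))) \<le> M"
    and e: "e > 0"
  shows "eventually (\<lambda>m. \<forall>xs\<in>B. norm (pin \<pi> xs (\<pi> (\<eta> m) (v m))) \<le> e) sequentially"
proof -
  define W where "W = {y. \<forall>m. \<forall>xs\<in>B. norm (pin \<pi> xs (\<pi> y (v m))) \<le> 1}"
  have "W = (\<Inter>m. \<Inter>xs\<in>B. {y. norm (pin \<pi> xs (\<pi> y (v m))) \<le> 1})" by (auto simp: W_def)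
  moreover have "closed {y. norm (pin \<pi> xs (\<pi> y (v m))) \<le> 1}" for xs m
  proof -
    have "continuous_on UNIV (\<lambda>y. pin \<pi> (xs @ [y]) (v m))" by (rule cont_slice[OF C])
    then have "continuous_on UNIV (\<lambda>y. norm (pin \<pi> xs (\<pi> y (v m))))"
      by (simp add: pin_snoc[OF U] continuous_on_norm)
    then show ?thesis by (rule closed_Collect_le) (rule continuous_on_const)
  qed
  ultimately have clW: "closed W" by (simp add: closed_INT)
  have cvW: "convex W" unfolding convex_def
  proof (intro ballI allI impI)
    fix x y and a b :: real assume x: "x \<in> W" and y: "y \<in> W" and ab0: "0 \<le> a" "0 \<le> b" "a + b = 1"
    have ab: "0 \<le> a \<and> 0 \<le> b \<and> a + b = 1" using ab0 by blast
    show "a *\<^sub>R x + b *\<^sub>R y \<in> W" unfolding W_def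
    proof (intro CollectI allI ballI)
      fix m xs assume xs: "xs \<in> B"
      have "norm (pin \<pi> xs (\<pi> (a *\<^sub>R x + b *\<^sub>R y) (v m)))
          = norm (a *\<^sub>R pin \<pi> xs (\<pi> x (v m)) + b *\<^sub>R pin \<pi> xs (\<pi> y (v m)))"
        by (simp add: T_lin_add[OF U] T_lin_scale[OF U])
      also have "\<dots> \<le> a * norm (pin \<pi> xs (\<pi> x (v m))) + b * norm (pin \<pi> xs (\<pi> y (v m)))"
        using ab by (smt (verit) norm_scaleR norm_triangle_ineq abs_of_nonneg)
      also have "\<dots> \<le> a * 1 + b * 1"
        using x y xs ab unfolding W_def by (intro add_mono mult_left_mono) auto
      finally show "norm (pin \<pi> xs (\<pi> (a *\<^sub>R x + b *\<^sub>R y) (v m))) \<le> 1" using ab by simp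
    qed
  qed
  have ciW: "circled W" unfolding circled_def
  proof (intro allI impI subsetI)
    fix c :: real and z assume c: "\<bar>c\<bar> \<le> 1" and z: "z \<in> (\<lambda>x. c *\<^sub>R x) ` W"
    then obtain x where x: "x \<in> W" "z = c *\<^sub>R x" by blast
    show "z \<in> W" unfolding W_def
    proof (intro CollectI allI ballI)
      fix m xs assume xs: "xs \<in> B"
      have "norm (pin \<pi> xs (\<pi> z (v m))) = \<bar>c\<bar> * norm (pin \<pi> xs (\<pi> x (v m)))"
        by (simp add: x(2) T_lin_scale[OF U])
      also have "\<dots> \<le> 1 * 1" using c x(1) xs unfolding W_def
        by (intro mult_mono) auto
      finally show "norm (pin \<pi> xs (\<pi> z (v m))) \<le> 1" by simp
    qed
  qed
  have abW: "absorbing W" unfolding absorbing_def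
  proof
    fix y
    obtain M where M: "\<forall>m. \<forall>xs\<in>B. norm (pin \<pi> xs (\<pi> y (v m))) \<le> M" using bd by blast
    define M' where "M' = max M 1"
    have M'pos: "M' > 0" by (simp add: M'_def)
    show "\<exists>r>0. \<forall>c. \<bar>c\<bar> \<le> r \<longrightarrow> c *\<^sub>R y \<in> W"
    proof (intro exI[of _ "1 / M'"] conjI allI impI)
      show "0 < 1 / M'" using M'pos by simp
      fix c :: real assume c: "\<bar>c\<bar> \<le> 1 / M'"
      show "c *\<^sub>R y \<in> W" unfolding W_def
      proof (intro CollectI allI ballI)
        fix m xs assume xs: "xs \<in> B"
        have "norm (pin \<pi> xs (\<pi> (c *\<^sub>R y) (v m))) = \<bar>c\<bar> * norm (pin \<pi> xs (\<pi> y (v m)))"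
          by (simp add: T_lin_scale[OF U])
        also have "\<dots> \<le> (1 / M') * M'"
        proof (rule mult_mono)
          have "norm (pin \<pi> xs (\<pi> y (v m))) \<le> M" using M xs by blast
          then show "norm (pin \<pi> xs (\<pi> y (v m))) \<le> M'" unfolding M'_def by linarith
        qed (use c M'pos in auto)
        finally show "norm (pin \<pi> xs (\<pi> (c *\<^sub>R y) (v m))) \<le> 1" using M'pos by simp
      qed
    qed
  qed
  obtain V where V: "open V" "0 \<in> V" "V \<subseteq> W"
    using Ba clW cvW ciW abW unfolding barrelled_def by blast
  have "(\<lambda>m. (1 / e) *\<^sub>R \<eta> m) \<longlonglongrightarrow> (1 / e) *\<^sub>R 0"
    by (rule g_scale_tendsto[OF L eta])
  then have "eventually (\<lambda>m. (1 / e) *\<^sub>R \<eta> m \<in> V) sequentially"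
    using V by (intro topological_tendstoD) auto
  then show ?thesis
  proof (rule eventually_mono)
    fix m assume "(1 / e) *\<^sub>R \<eta> m \<in> V"
    then have w: "(1 / e) *\<^sub>R \<eta> m \<in> W" using V by blast
    show "\<forall>xs\<in>B. norm (pin \<pi> xs (\<pi> (\<eta> m) (v m))) \<le> e"
    proof
      fix xs assume xs: "xs \<in> B"
      have "\<eta> m = e *\<^sub>R ((1 / e) *\<^sub>R \<eta> m)" using e by simp
      then have "norm (pin \<pi> xs (\<pi> (\<eta> m) (v m))) = e * norm (pin \<pi> xs (\<pi> ((1 / e) *\<^sub>R \<eta> m) (v m)))"
        using e by (metis T_lin_scale[OF U] norm_scaleR abs_of_pos)
      also have "\<dots> \<le> e * 1" using w xs e unfolding W_def by (intro mult_left_mono) auto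
      finally show "norm (pin \<pi> xs (\<pi> (\<eta> m) (v m))) \<le> e" by simp
    qed
  qed
qed

end

context
  fixes br :: "'g::{real_vector,t2_space} \<Rightarrow> 'g \<Rightarrow> 'g" and \<pi> :: "'g \<Rightarrow> 'v::complex_inner \<Rightarrow> 'v"
    and \<B> :: "'g list set set"
  assumes L: "lc_lie_algebra br" and Ba: "barrelled TYPE('g)" and U: "unitary_rep br \<pi>"
    and C: "continuous_rep \<pi>"
    and fin: "\<And>B. B \<in> \<B> \<Longrightarrow> finB \<pi> B"
    and app: "\<And>B y. B \<in> \<B> \<Longrightarrow> (\<lambda>xs. xs @ [y]) ` B \<in> \<B>"
begin

lemma pi_diff_v: "\<pi> x (a - b) = \<pi> x a - \<pi> x b"
  using pin_diff[OF U, of "[x]" a b] by simp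

lemma bil:
  fixes \<zeta> :: "real \<Rightarrow> 'g" and \<phi> :: "real \<Rightarrow> 'v"
  assumes z: "(\<zeta> \<longlongrightarrow> z0) (at t within I)"
    and p: "conv \<pi> \<B> \<phi> p0 (at t within I)"
  shows "conv \<pi> \<B> (\<lambda>s. \<pi> (\<zeta> s) (\<phi> s)) (\<pi> z0 p0) (at t within I)"
proof -
  have Bc: "conv \<pi> \<B> (\<lambda>s. \<pi> z0 (\<phi> s)) (\<pi> z0 p0) (at t within I)"
    unfolding conv_def
  proof
    fix B assume B: "B \<in> \<B>"
    define B' where "B' = (\<lambda>xs. xs @ [z0]) ` B"
    have B': "B' \<in> \<B>" using app[OF B] by (simp add: B'_def)
    have t1: "((\<lambda>s. sp \<pi> B' (\<phi> s - p0)) \<longlongrightarrow> 0) (at t within I)" using p B' unfolding conv_def by blast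
    have le: "sp \<pi> B (\<pi> z0 (\<phi> s) - \<pi> z0 p0) \<le> sp \<pi> B' (\<phi> s - p0)" for s
      unfolding pi_diff_v[symmetric] B'_def by (rule sp_pi[OF U fin[OF B] fin[OF B'[unfolded B'_def]]])
    show "((\<lambda>s. sp \<pi> B (\<pi> z0 (\<phi> s) - \<pi> z0 p0)) \<longlongrightarrow> 0) (at t within I)"
      by (rule tendsto_sandwich[OF always_eventually always_eventually tendsto_const t1])
         (use le sp_nonneg in blast)+
  qed
  have A: "conv \<pi> \<B> (\<lambda>s. \<pi> (\<zeta> s - z0) (\<phi> s)) 0 (at t within I)"
    unfolding conv_def
  proof
    fix B assume B: "B \<in> \<B>"
    show "((\<lambda>s. sp \<pi> B (\<pi> (\<zeta> s - z0) (\<phi> s) - 0)) \<longlongrightarrow> 0) (at t within I)"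
      unfolding tendsto0_nonneg_iff[OF sp_nonneg]
    proof (intro allI impI)
      fix e :: real assume e: "e > 0"
      show "eventually (\<lambda>s. sp \<pi> B (\<pi> (\<zeta> s - z0) (\<phi> s) - 0) < e) (at t within I)"
      proof (rule sequentially_imp_eventually_within, intro allI impI)
        fix sq :: "nat \<Rightarrow> real" assume sq: "(\<forall>n. sq n \<in> I \<and> sq n \<noteq> t) \<and> sq \<longlonglongrightarrow> t"
        have fl: "filterlim sq (at t within I) sequentially"
          using sq by (simp add: filterlim_at)
        define \<eta> where "\<eta> m = \<zeta> (sq m) - z0" for m
        define v where "v m = \<phi> (sq m)" for m
        have eta: "\<eta> \<longlonglongrightarrow> 0"
          using g_diff_tendsto[OF L filterlim_compose[OF z fl] tendsto_const[of z0]]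
          unfolding \<eta>_def[abs_def] by simp
        have bd: "\<exists>M. \<forall>m. \<forall>xs\<in>B. norm (pin \<pi> xs (\<pi> y (v m))) \<le> M" for y
        proof -
          define B' where "B' = (\<lambda>xs. xs @ [y]) ` B"
          have B': "B' \<in> \<B>" using app[OF B] by (simp add: B'_def)
          have t1: "((\<lambda>s. sp \<pi> B' (\<phi> s - p0)) \<longlongrightarrow> 0) (at t within I)" using p B' unfolding conv_def by blast
          have "(\<lambda>m. sp \<pi> B' (\<phi> (sq m) - p0)) \<longlonglongrightarrow> 0" using filterlim_compose[OF t1 fl] .
          then have "Bseq (\<lambda>m. sp \<pi> B' (\<phi> (sq m) - p0))" using convergent_imp_Bseq convergentI by blast
          then obtain K where K: "\<forall>m. norm (sp \<pi> B' (\<phi> (sq m) - p0)) \<le> K" by (rule BseqE) blast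
          show ?thesis
          proof (intro exI[of _ "K + sp \<pi> B' p0"] allI ballI)
            fix m xs assume xs: "xs \<in> B"
            have "norm (pin \<pi> xs (\<pi> y (v m))) = norm (pin \<pi> (xs @ [y]) (v m))"
              by (simp add: pin_snoc[OF U])
            also have "\<dots> \<le> sp \<pi> B' (v m)" using xs by (intro sp_upper[OF fin[OF B']]) (simp add: B'_def)
            also have "\<dots> \<le> sp \<pi> B' (\<phi> (sq m) - p0) + sp \<pi> B' p0"
              using sp_tri[OF U fin[OF B'], of "\<phi> (sq m) - p0" p0] by (simp add: v_def)
            also have "\<dots> \<le> K + sp \<pi> B' p0" using K[rule_format, of m] sp_nonneg[of \<pi> B' "\<phi> (sq m) - p0"]
              by simp
            finally show "norm (pin \<pi> xs (\<pi> y (v m))) \<le> K + sp \<pi> B' p0" .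
          qed
        qed
        have e2: "e / 2 > 0" using e by simp
        from seq_lemma[OF L Ba U C eta bd e2]
        show "eventually (\<lambda>n. sp \<pi> B (\<pi> (\<zeta> (sq n) - z0) (\<phi> (sq n)) - 0) < e) sequentially"
        proof (rule eventually_mono)
          fix m assume "\<forall>xs\<in>B. norm (pin \<pi> xs (\<pi> (\<eta> m) (v m))) \<le> e / 2"
          then have "sp \<pi> B (\<pi> (\<eta> m) (v m)) \<le> e / 2" using sp_le_iff[OF fin[OF B], of "e/2"] e2 by (meson less_imp_le)
          then show "sp \<pi> B (\<pi> (\<zeta> (sq m) - z0) (\<phi> (sq m)) - 0) < e" using e by (simp add: \<eta>_def v_def)
        qed
      qed
    qed
  qed
  have "conv \<pi> \<B> (\<lambda>s. \<pi> (\<zeta> s - z0) (\<phi> s) + \<pi> z0 (\<phi> s)) (0 + \<pi> z0 p0) (at t within I)"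
    by (rule conv_add[OF U fin A Bc])
  moreover have "\<pi> (\<zeta> s - z0) (\<phi> s) + \<pi> z0 (\<phi> s) = \<pi> (\<zeta> s) (\<phi> s)" for s
    by (simp add: pi_diff_x[OF U])
  ultimately show ?thesis by simp
qed

lemma main_generic:
  fixes n :: enat and I :: "real set" and \<Xi> :: "nat \<Rightarrow> real \<Rightarrow> 'g" and \<Psi> :: "nat \<Rightarrow> real \<Rightarrow> 'v"
  assumes X: "Cn_family (euclidean :: 'g topology) I n \<Xi>"
    and P: "Cn_family (seminorm_topology (semS \<pi> \<B>)) I n \<Psi>"
  shows "Cn_family (seminorm_topology (semS \<pi> \<B>)) I n
           (\<lambda>k t. \<Sum>j\<le>k. of_nat (k choose j) *\<^sub>R \<pi> (\<Xi> j t) (\<Psi> (k - j) t))"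
proof -
  have LI: "\<And>f l F. limitin (seminorm_topology (semS \<pi> \<B>)) f l F \<longleftrightarrow> conv \<pi> \<B> f l F"
    by (rule limitin_sem_iff[OF U]) (rule fin)
  note bil' = bil
  have Xc: "(\<Xi> j \<longlongrightarrow> \<Xi> j t) (at t within I)" if "enat j \<le> n" "t \<in> I" for j t
  proof -
    have "continuous_map (top_of_set I) euclidean (\<Xi> j)" using X that unfolding Cn_family_def by blast
    from cmap_limit[OF this that(2)] show ?thesis by simp
  qed
  have Pc: "conv \<pi> \<B> (\<Psi> j) (\<Psi> j t) (at t within I)" if "enat j \<le> n" "t \<in> I" for j t
  proof -
    have "continuous_map (top_of_set I) (seminorm_topology (semS \<pi> \<B>)) (\<Psi> j)"
      using P that unfolding Cn_family_def by blast
    from cmap_limit[OF this that(2)] show ?thesis by (simp add: LI)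
  qed
  have Xd: "((\<lambda>s. inverse (s - t) *\<^sub>R (\<Xi> j s - \<Xi> j t)) \<longlongrightarrow> \<Xi> (Suc j) t) (at t within I)"
    if "enat j < n" "t \<in> I" for j t
    using X that unfolding Cn_family_def by simp
  have Pd: "conv \<pi> \<B> (\<lambda>s. inverse (s - t) *\<^sub>R (\<Psi> j s - \<Psi> j t)) (\<Psi> (Suc j) t) (at t within I)"
    if "enat j < n" "t \<in> I" for j t
    using P that unfolding Cn_family_def by (simp add: LI)
  show ?thesis unfolding Cn_family_def
  proof (intro conjI allI impI ballI)
    fix k assume k: "enat k \<le> n"
    show "continuous_map (top_of_set I) (seminorm_topology (semS \<pi> \<B>))
            (\<lambda>t. \<Sum>j\<le>k. of_nat (k choose j) *\<^sub>R \<pi> (\<Xi> j t) (\<Psi> (k - j) t))"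
    proof (rule limit_cmap)
      fix t assume t: "t \<in> I"
      have "conv \<pi> \<B> (\<lambda>s. \<Sum>j\<le>k. of_nat (k choose j) *\<^sub>R \<pi> (\<Xi> j s) (\<Psi> (k - j) s))
          (\<Sum>j\<le>k. of_nat (k choose j) *\<^sub>R \<pi> (\<Xi> j t) (\<Psi> (k - j) t)) (at t within I)"
      proof (rule conv_sum[OF U fin finite_atMost])
        fix j assume j: "j \<in> {..k}"
        have j1: "enat j \<le> n" using j k by (metis atMost_iff enat_ord_simps(1) order_trans)
        have j2: "enat (k - j) \<le> n" using k by (meson diff_le_self enat_ord_simps(1) order_trans)
        show "conv \<pi> \<B> (\<lambda>s. of_nat (k choose j) *\<^sub>R \<pi> (\<Xi> j s) (\<Psi> (k - j) s))
            (of_nat (k choose j) *\<^sub>R \<pi> (\<Xi> j t) (\<Psi> (k - j) t)) (at t within I)"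
          using conv_scale[OF U fin bil'[OF Xc[OF j1 t] Pc[OF j2 t]]] by simp
      qed
      then show "limitin (seminorm_topology (semS \<pi> \<B>))
          (\<lambda>t. \<Sum>j\<le>k. of_nat (k choose j) *\<^sub>R \<pi> (\<Xi> j t) (\<Psi> (k - j) t))
          (\<Sum>j\<le>k. of_nat (k choose j) *\<^sub>R \<pi> (\<Xi> j t) (\<Psi> (k - j) t)) (at t within I)"
        by (simp add: LI)
    qed
  next
    fix k t assume k: "enat k < n" and t: "t \<in> I"
    define a where "a j s = inverse (s - t) *\<^sub>R (\<Xi> j s - \<Xi> j t)" for j s
    define b where "b j s = inverse (s - t) *\<^sub>R (\<Psi> (k - j) s - \<Psi> (k - j) t)" for j s
    have eq: "inverse (s - t) *\<^sub>R
        ((\<Sum>j\<le>k. of_nat (k choose j) *\<^sub>R \<pi> (\<Xi> j s) (\<Psi> (k - j) s)) -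
         (\<Sum>j\<le>k. of_nat (k choose j) *\<^sub>R \<pi> (\<Xi> j t) (\<Psi> (k - j) t)))
      = (\<Sum>j\<le>k. of_nat (k choose j) *\<^sub>R (\<pi> (a j s) (\<Psi> (k - j) s) + \<pi> (\<Xi> j t) (b j s)))" for s
    proof -
      have tj: "inverse (s - t) *\<^sub>R (\<pi> (\<Xi> j s) (\<Psi> (k - j) s) - \<pi> (\<Xi> j t) (\<Psi> (k - j) t))
          = \<pi> (a j s) (\<Psi> (k - j) s) + \<pi> (\<Xi> j t) (b j s)" for j
      proof -
        have 1: "\<pi> (a j s) (\<Psi> (k - j) s) = inverse (s - t) *\<^sub>R (\<pi> (\<Xi> j s) (\<Psi> (k - j) s) - \<pi> (\<Xi> j t) (\<Psi> (k - j) s))"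
          unfolding a_def pi_scale_x[OF U] pi_diff_x[OF U] ..
        have 2: "\<pi> (\<Xi> j t) (b j s) = inverse (s - t) *\<^sub>R (\<pi> (\<Xi> j t) (\<Psi> (k - j) s) - \<pi> (\<Xi> j t) (\<Psi> (k - j) t))"
          unfolding b_def pi_scale_v[OF U] pi_diff_v ..
        have 3: "\<And>(c::real) (A::'v) B D. c *\<^sub>R (A - B) + c *\<^sub>R (B - D) = c *\<^sub>R (A - D)"
          by (simp add: algebra_simps)
        show ?thesis unfolding 1 2 3 ..
      qed
      have 4: "\<And>(c::real) d (x::'v) y. c *\<^sub>R (d *\<^sub>R x - d *\<^sub>R y) = d *\<^sub>R (c *\<^sub>R (x - y))"
        by (simp add: algebra_simps)
      show ?thesis
        unfolding sum_subtractf[symmetric] scaleR_right.sum 4 tj ..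
    qed
    have lim: "conv \<pi> \<B> (\<lambda>s. \<Sum>j\<le>k. of_nat (k choose j) *\<^sub>R (\<pi> (a j s) (\<Psi> (k - j) s) + \<pi> (\<Xi> j t) (b j s)))
        (\<Sum>j\<le>k. of_nat (k choose j) *\<^sub>R (\<pi> (\<Xi> (Suc j) t) (\<Psi> (k - j) t) + \<pi> (\<Xi> j t) (\<Psi> (Suc (k - j)) t)))
        (at t within I)"
    proof (rule conv_sum[OF U fin finite_atMost])
      fix j assume j: "j \<in> {..k}"
      have j1: "enat j < n" using j k by (metis atMost_iff enat_ord_simps(1) le_less_trans)
      have j2: "enat (k - j) < n" using k by (meson diff_le_self enat_ord_simps(1) le_less_trans)
      have j3: "enat (k - j) \<le> n" using j2 by simp
      have c1: "conv \<pi> \<B> (\<lambda>s. \<pi> (a j s) (\<Psi> (k - j) s)) (\<pi> (\<Xi> (Suc j) t) (\<Psi> (k - j) t)) (at t within I)"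
        using bil'[OF Xd[OF j1 t] Pc[OF j3 t]] by (simp add: a_def)
      have c2: "conv \<pi> \<B> (\<lambda>s. \<pi> (\<Xi> j t) (b j s)) (\<pi> (\<Xi> j t) (\<Psi> (Suc (k - j)) t)) (at t within I)"
        using bil'[OF tendsto_const Pd[OF j2 t]] by (simp add: b_def)
      show "conv \<pi> \<B> (\<lambda>s. of_nat (k choose j) *\<^sub>R (\<pi> (a j s) (\<Psi> (k - j) s) + \<pi> (\<Xi> j t) (b j s)))
          (of_nat (k choose j) *\<^sub>R (\<pi> (\<Xi> (Suc j) t) (\<Psi> (k - j) t) + \<pi> (\<Xi> j t) (\<Psi> (Suc (k - j)) t)))
          (at t within I)"
        using conv_scale[OF U fin conv_add[OF U fin c1 c2]] by simp
    qed
    have pas: "(\<Sum>j\<le>k. of_nat (k choose j) *\<^sub>R (\<pi> (\<Xi> (Suc j) t) (\<Psi> (k - j) t) + \<pi> (\<Xi> j t) (\<Psi> (Suc (k - j)) t)))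
       = (\<Sum>j\<le>Suc k. of_nat (Suc k choose j) *\<^sub>R \<pi> (\<Xi> j t) (\<Psi> (Suc k - j) t))"
      using pascal_sum[of k "\<lambda>j i. \<pi> (\<Xi> j t) (\<Psi> i t)"] by simp
    show "limitin (seminorm_topology (semS \<pi> \<B>))
        (\<lambda>s. inverse (s - t) *\<^sub>R
             ((\<Sum>j\<le>k. of_nat (k choose j) *\<^sub>R \<pi> (\<Xi> j s) (\<Psi> (k - j) s)) -
              (\<Sum>j\<le>k. of_nat (k choose j) *\<^sub>R \<pi> (\<Xi> j t) (\<Psi> (k - j) t))))
        (\<Sum>j\<le>Suc k. of_nat (Suc k choose j) *\<^sub>R \<pi> (\<Xi> j t) (\<Psi> (Suc k - j) t)) (at t within I)"
      unfolding eq pas[symmetric] LI by (rule lim)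
  qed
qed

end

lemma tvs_bounded_subset:
  assumes "tvs_bounded S" "T \<subseteq> S" shows "tvs_bounded T"
  unfolding tvs_bounded_def
proof (intro allI impI)
  fix U :: "'a set" assume "open U \<and> 0 \<in> U"
  then obtain s where "s > 0" "\<forall>t. s < t \<longrightarrow> S \<subseteq> (\<lambda>x. t *\<^sub>R x) ` U"
    using assms(1) unfolding tvs_bounded_def by blast
  then show "\<exists>s>0. \<forall>t. s < t \<longrightarrow> T \<subseteq> (\<lambda>x. t *\<^sub>R x) ` U"
    using assms(2) by (meson order.trans)
qed

lemma tvs_bounded_empty: "tvs_bounded {}"
  unfolding tvs_bounded_def by (intro allI impI exI[of _ 1]) simp

lemma tvs_bounded_single:
  fixes br :: "'g::{real_vector,t2_space} \<Rightarrow> 'g \<Rightarrow> 'g"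
  assumes L: "lc_lie_algebra br"
  shows "tvs_bounded {y::'g}"
  unfolding tvs_bounded_def
proof (intro allI impI)
  fix U :: "'g set" assume U: "open U \<and> 0 \<in> U"
  have sc: "continuous_on UNIV (\<lambda>z::real \<times> 'g. fst z *\<^sub>R snd z)" using L unfolding lc_lie_algebra_def by blast
  have "continuous_on UNIV (\<lambda>c::real. (c, y))" by (rule continuous_on_Pair[OF continuous_on_id continuous_on_const])
  from continuous_on_compose2[OF sc this] have hc: "continuous_on UNIV (\<lambda>c::real. c *\<^sub>R y)" by simp
  have op: "open ((\<lambda>c::real. c *\<^sub>R y) -` U)"
    using continuous_on_open_vimage[OF open_UNIV, THEN iffD1, OF hc, rule_format, OF conjunct1[OF U]] by simp
  have z: "(0::real) \<in> (\<lambda>c::real. c *\<^sub>R y) -` U" using U by simp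
  obtain d where d: "d > 0" "ball 0 d \<subseteq> (\<lambda>c::real. c *\<^sub>R y) -` U"
    using open_contains_ball_eq[OF op] z by blast
  show "\<exists>s>0. \<forall>t. s < t \<longrightarrow> {y} \<subseteq> (\<lambda>x. t *\<^sub>R x) ` U"
  proof (intro exI[of _ "1 / d"] conjI allI impI)
    show "0 < 1 / d" using d by simp
    fix t :: real assume t: "1 / d < t"
    have "0 < 1 / d" using d by simp
    then have tpos: "t > 0" using t by linarith
    have "1 / t < d" using t d tpos by (simp add: field_simps)
    then have "1 / t \<in> ball 0 d" using tpos by simp
    then have "(1 / t) *\<^sub>R y \<in> U" using d by blast
    moreover have "y = t *\<^sub>R ((1 / t) *\<^sub>R y)" using tpos by simp
    ultimately show "{y} \<subseteq> (\<lambda>x. t *\<^sub>R x) ` U" by blast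
  qed
qed

lemma gn_bounded_app:
  fixes br :: "'g::{real_vector,t2_space} \<Rightarrow> 'g \<Rightarrow> 'g" and B :: "'g list set"
  assumes L: "lc_lie_algebra br" and B: "gn_bounded n B"
  shows "gn_bounded (Suc n) ((\<lambda>xs. xs @ [y]) ` B)"
proof -
  have len: "\<And>xs. xs \<in> B \<Longrightarrow> length xs = n" using B unfolding gn_bounded_def by blast
  have bd: "\<And>i. i < n \<Longrightarrow> tvs_bounded ((\<lambda>xs. xs ! i) ` B)" using B unfolding gn_bounded_def by blast
  show ?thesis unfolding gn_bounded_def
  proof (intro conjI ballI allI impI)
    fix xs assume "xs \<in> (\<lambda>xs. xs @ [y]) ` B"
    then obtain zs where "zs \<in> B" "xs = zs @ [y]" by blast
    then show "length xs = Suc n" using len by simp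
  next
    fix i assume i: "i < Suc n"
    show "tvs_bounded ((\<lambda>xs. xs ! i) ` (\<lambda>xs. xs @ [y]) ` B)"
    proof (cases "i < n")
      case True
      have "(\<lambda>xs. xs ! i) ` (\<lambda>xs. xs @ [y]) ` B \<subseteq> (\<lambda>xs. xs ! i) ` B"
      proof
        fix z assume "z \<in> (\<lambda>xs. xs ! i) ` (\<lambda>xs. xs @ [y]) ` B"
        then obtain zs where zs: "zs \<in> B" "z = (zs @ [y]) ! i" by blast
        then have "z = zs ! i" using len[OF zs(1)] True by (simp add: nth_append)
        then show "z \<in> (\<lambda>xs. xs ! i) ` B" using zs(1) by blast
      qed
      then show ?thesis by (rule tvs_bounded_subset[OF bd[OF True]])
    next
      case False
      then have "i = n" using i by simp
      have "(\<lambda>xs. xs ! i) ` (\<lambda>xs. xs @ [y]) ` B \<subseteq> {y}"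
      proof
        fix z assume "z \<in> (\<lambda>xs. xs ! i) ` (\<lambda>xs. xs @ [y]) ` B"
        then obtain zs where zs: "zs \<in> B" "z = (zs @ [y]) ! i" by blast
        then show "z \<in> {y}" using len[OF zs(1)] \<open>i = n\<close> by (simp add: nth_append)
      qed
      moreover have "tvs_bounded {y}" by (rule tvs_bounded_single[OF L])
      ultimately show ?thesis using tvs_bounded_subset by metis
    qed
  qed
qed

lemma gn_bounded_fin:
  fixes \<pi> :: "'g::{real_vector,topological_space} \<Rightarrow> 'v::complex_inner \<Rightarrow> 'v"
  assumes U: "unitary_rep br \<pi>" and C: "continuous_rep \<pi>" and B: "gn_bounded n B"
  shows "finB \<pi> B"
  unfolding finB_def
proof
  fix v
  define f where "f x = pin \<pi> (map x [0..<n]) v" for x :: "nat \<Rightarrow> 'g"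
  define X where "X = product_topology (\<lambda>_. (euclidean :: 'g topology)) {..<n}"
  have fc: "continuous_map X euclidean f" using C unfolding continuous_rep_def f_def X_def by blast
  define x0 where "x0 = (\<lambda>i\<in>{..<n}. (0::'g))"
  have x0: "x0 \<in> topspace X" by (simp add: X_def x0_def)
  have "openin X {x \<in> topspace X. f x \<in> ball (f x0) 1}"
    by (rule openin_continuous_map_preimage[OF fc]) simp
  moreover have "x0 \<in> {x \<in> topspace X. f x \<in> ball (f x0) 1}" using x0 by simp
  ultimately obtain V where V: "\<forall>i\<in>{..<n}. openin euclidean (V i)" "x0 \<in> Pi\<^sub>E {..<n} V"
      "Pi\<^sub>E {..<n} V \<subseteq> {x \<in> topspace X. f x \<in> ball (f x0) 1}"
    unfolding X_def openin_product_topology_alt by blast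
  define W where "W = (\<Inter>i\<in>{..<n}. V i)"
  have W: "open W" "0 \<in> W" using V(1,2) by (auto simp: W_def x0_def open_INT)
  have "\<forall>i\<in>{..<n}. \<exists>s>0. \<forall>t. s < t \<longrightarrow> (\<lambda>xs. xs ! i) ` B \<subseteq> (\<lambda>x. t *\<^sub>R x) ` W"
    using B W unfolding gn_bounded_def tvs_bounded_def by blast
  from bchoice[OF this] obtain s where s: "\<forall>i\<in>{..<n}. s i > 0 \<and> (\<forall>t. s i < t \<longrightarrow> (\<lambda>xs. xs ! i) ` B \<subseteq> (\<lambda>x. t *\<^sub>R x) ` W)"
    by (elim exE) (rule that)
  define t0 where "t0 = 1 + (\<Sum>i<n. s i)"
  have sle: "s i < t0" if "i < n" for i
  proof -
    have "s i \<le> (\<Sum>i<n. s i)" using that s by (intro member_le_sum) (auto intro: less_imp_le)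
    then show ?thesis by (simp add: t0_def)
  qed
  have t0pos: "t0 > 0"
  proof -
    have "0 \<le> (\<Sum>i<n. s i)" using s by (intro sum_nonneg) (auto intro: less_imp_le)
    then show ?thesis by (simp add: t0_def)
  qed
  define K where "K = t0 ^ n * (1 + norm (f x0))"
  have bnd: "norm (pin \<pi> xs v) \<le> K" if xs: "xs \<in> B" for xs
  proof -
    have len: "length xs = n" using B xs unfolding gn_bounded_def by blast
    define us where "us = map (\<lambda>y. (1 / t0) *\<^sub>R y) xs"
    have xsus: "xs = map (\<lambda>y. t0 *\<^sub>R y) us" using t0pos by (simp add: us_def comp_def)
    have usW: "us ! i \<in> W" if "i < n" for i
    proof -
      have "i \<in> {..<n}" using that by simp
      then have "(\<lambda>xs. xs ! i) ` B \<subseteq> (\<lambda>x. t0 *\<^sub>R x) ` W" using s sle[OF that] by blast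
      then have "xs ! i \<in> (\<lambda>x. t0 *\<^sub>R x) ` W" using xs by blast
      then obtain w where "w \<in> W" "xs ! i = t0 *\<^sub>R w" by blast
      then show ?thesis using that len t0pos by (simp add: us_def)
    qed
    define x where "x = (\<lambda>i\<in>{..<n}. us ! i)"
    have "x \<in> Pi\<^sub>E {..<n} V" using usW by (auto simp: x_def W_def)
    then have "f x \<in> ball (f x0) 1" using V(3) by blast
    moreover have "map x [0..<n] = us" by (rule nth_equalityI) (auto simp: x_def us_def len)
    ultimately have "norm (pin \<pi> us v - f x0) < 1" by (simp add: f_def dist_norm norm_minus_commute)
    then have nu: "norm (pin \<pi> us v) \<le> 1 + norm (f x0)" by (smt (verit) norm_triangle_ineq2)
    have "pin \<pi> xs v = (t0 ^ n) *\<^sub>R pin \<pi> us v"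
      unfolding xsus pin_scale_list[OF U] by (simp add: us_def len)
    then have "norm (pin \<pi> xs v) = t0 ^ n * norm (pin \<pi> us v)" using t0pos by simp
    also have "\<dots> \<le> K" unfolding K_def using nu t0pos by (intro mult_left_mono) auto
    finally show ?thesis .
  qed
  have "(SUP xs\<in>B. ereal (norm (pin \<pi> xs v))) \<le> ereal K" using bnd by (simp add: SUP_le_iff)
  also have "\<dots> < \<infinity>" by simp
  finally show "(SUP xs\<in>B. ereal (norm (pin \<pi> xs v))) < \<infinity>" .
qed

theorem proposition3p18:
  fixes br :: "'g::{real_vector,t2_space} \<Rightarrow> 'g \<Rightarrow> 'g"
    and \<pi> :: "'g \<Rightarrow> 'v::complex_inner \<Rightarrow> 'v"
    and n :: enat
    and I :: "real set"
    and \<Xi> :: "nat \<Rightarrow> real \<Rightarrow> 'g"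
    and \<Psi> :: "nat \<Rightarrow> real \<Rightarrow> 'v"
    and T :: "'v topology"
  assumes "lc_lie_algebra br"
    and "barrelled TYPE('g)"
    and "unitary_rep br \<pi>"
    and "continuous_rep \<pi>"
    and "is_interval I"
    and "T = strong_top \<pi> \<or> T = weak_top \<pi>"
    and "Cn_family (euclidean :: 'g topology) I n \<Xi>"
    and "Cn_family T I n \<Psi>"
  shows "Cn_family T I n
           (\<lambda>k t. \<Sum>j\<le>k. of_nat (k choose j) *\<^sub>R \<pi> (\<Xi> j t) (\<Psi> (k - j) t))"
proof -
  note L = assms(1) and Ba = assms(2) and U = assms(3) and C = assms(4)
  from assms(6) show ?thesis
  proof
    assume T: "T = strong_top \<pi>"
    define \<B> where "\<B> = {B :: 'g list set. \<exists>m. gn_bounded m B}"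
    have Teq: "T = seminorm_topology (semS \<pi> \<B>)"
      unfolding T strong_top_def semS_def \<B>_def by (rule arg_cong[where f = seminorm_topology]) blast
    show ?thesis unfolding Teq
    proof (rule main_generic[OF L Ba U C])
      fix B assume "B \<in> \<B>"
      then obtain m where "gn_bounded m B" by (auto simp: \<B>_def)
      then show "finB \<pi> B" by (rule gn_bounded_fin[OF U C])
    next
      fix B y assume "B \<in> \<B>"
      then obtain m where "gn_bounded m B" by (auto simp: \<B>_def)
      then have "gn_bounded (Suc m) ((\<lambda>xs. xs @ [y]) ` B)" by (rule gn_bounded_app[OF L])
      then show "(\<lambda>xs. xs @ [y]) ` B \<in> \<B>" by (auto simp: \<B>_def)
    next
      show "Cn_family euclidean I n \<Xi>" by (rule assms(7))
      show "Cn_family (seminorm_topology (semS \<pi> \<B>)) I n \<Psi>" using assms(8) Teq by simp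
    qed
  next
    assume T: "T = weak_top \<pi>"
    define \<B> where "\<B> = {{xs} | xs :: 'g list. True}"
    have "semS \<pi> \<B> = {(\<lambda>\<psi>. ereal (norm (pin \<pi> xs \<psi>))) | xs. True}"
      unfolding semS_def \<B>_def
    proof (intro equalityI subsetI)
      fix p assume "p \<in> {\<lambda>\<psi>. SUP xs\<in>B. ereal (norm (pin \<pi> xs \<psi>)) |B. B \<in> {{xs} |xs. True}}"
      then obtain xs where "p = (\<lambda>\<psi>. SUP ys\<in>{xs}. ereal (norm (pin \<pi> ys \<psi>)))" by blast
      then have "p = (\<lambda>\<psi>. ereal (norm (pin \<pi> xs \<psi>)))" by simp
      then show "p \<in> {\<lambda>\<psi>. ereal (norm (pin \<pi> xs \<psi>)) |xs. True}" by blast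
    next
      fix p assume "p \<in> {\<lambda>\<psi>. ereal (norm (pin \<pi> xs \<psi>)) |xs. True}"
      then obtain xs where "p = (\<lambda>\<psi>. ereal (norm (pin \<pi> xs \<psi>)))" by blast
      then have "p = (\<lambda>\<psi>. SUP ys\<in>{xs}. ereal (norm (pin \<pi> ys \<psi>)))" by simp
      then show "p \<in> {\<lambda>\<psi>. SUP xs\<in>B. ereal (norm (pin \<pi> xs \<psi>)) |B. B \<in> {{xs} |xs. True}}" by blast
    qed
    then have Teq: "T = seminorm_topology (semS \<pi> \<B>)"
      unfolding T weak_top_def by simp
    show ?thesis unfolding Teq
    proof (rule main_generic[OF L Ba U C])
      fix B assume "B \<in> \<B>"
      then obtain xs where "B = {xs}" by (auto simp: \<B>_def)
      then show "finB \<pi> B" by (simp add: finB_def)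
    next
      fix B y assume "B \<in> \<B>"
      then obtain xs where "B = {xs}" by (auto simp: \<B>_def)
      then show "(\<lambda>xs. xs @ [y]) ` B \<in> \<B>" by (auto simp: \<B>_def)
    next
      show "Cn_family euclidean I n \<Xi>" by (rule assms(7))
      show "Cn_family (seminorm_topology (semS \<pi> \<B>)) I n \<Psi>" using assms(8) Teq by simp
    qed
  qed
qed

end
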